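(* Consider the load-balancing system described in the context under any policy in $\Pi$, with $S$ the stationary state, and $\mu_{\max}=\max\{\mu_1,\mu_2\}$. Then $$\mathbb P\left(S_{1,2}\le \frac{p}{\mu_2}+\frac{\log N}{2\sqrt N}\right)\ge 1-e^{-\frac{\mu_1\mu_2\log^2N}{40\mu_{\max}}}.$$
   Context: System: $N$ identical servers. Jobs arrive according to a Poisson process of rate $\lambda N$ with $\lambda=1-N^{-\alpha}$, $0<\alpha<0.5$. Service times are Coxian-2 with parameters $(\mu_1,\mu_2,p)$, $\mu_1,\mu_2>0$, $0\le p<1$: a job in service completes phase 1 at rate $\mu_1$; then with probability $1-p$ it leaves, and with probability $p$ it enters phase 2, completed at rate $\mu_2$. It is assumed that $\frac{1}{\mu_1}+\frac{p}{\mu_2}=1$. Each server holds at most $b$ jobs (one in service, $b-1$ in buffer); jobs routed to a full server are discarded. $S_{i,m}(t)$ is the fraction of servers with at least $i$ jobs whose job in service is in phase $m$, $S_i=S_{i,1}+S_{i,2}$; the state space is $\mathcal S^{(N)}=\{s\in\mathbb R^{b\times2}: 1\ge s_{1,m}\ge\cdots\ge s_{b,m}\ge0,\ s_{1,1}+s_{1,2}\le1,\ Ns_{i,m}\in\mathbb N\}$, with $s_i=s_{i,1}+s_{i,2}$. Policies dispatch based on the state and make the CTMC irreducible; $S$ denotes the stationary state. $A_1(s)$ is the probability that an arriving job is routed to a busy server in state $s$. $\Pi$ is the set of policies with $A_1(s)\le 1/\sqrt N$ for all $s\in\mathcal S^{(N)}$ with $s_1\le\lambda+\frac{1+\mu_1+\mu_2}{\min\{(1-p)\mu_1,\mu_2\}}\frac{\log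 N}{\sqrt N}$. *)

theory Defs
  imports Complex_Main
begin

text \<open>Aggregate state: s i m = fraction of servers with at least i jobs whose job in
  service is in phase m (indices i in 1..b, m in {1,2}; all other entries are 0).\<close>
type_synonym lbstate = "nat \<Rightarrow> nat \<Rightarrow> real"

definition state_space :: "nat \<Rightarrow> nat \<Rightarrow> lbstate set" where
  "state_space N b = {s.
     (\<forall>i m. (i < 1 \<or> b < i \<or> m \<notin> {1,2}) \<longrightarrow> s i m = 0) \<and>
     (\<forall>m\<in>{1,2::nat}. s 1 m \<le> 1 \<and> 0 \<le> s b m \<and> (\<forall>i\<in>{1..<b}. s (Suc i) m \<le> s i m)) \<and>
     s 1 1 + s 1 2 \<le> 1 \<and>
     (\<forall>i\<in>{1..b}. \<forall>m\<in>{1,2::nat}. real N * s i m \<in> \<nat>)}"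

text \<open>Dispatch classes: (0,1) = an idle server; (i,m) with 1 \<le> i \<le> b = a server with exactly
  i jobs whose job in service is in phase m.\<close>
definition busy_classes :: "nat \<Rightarrow> (nat \<times> nat) set" where
  "busy_classes b = {1..b} \<times> {1,2}"

definition classes :: "nat \<Rightarrow> (nat \<times> nat) set" where
  "classes b = insert (0,1) (busy_classes b)"

definition class_frac :: "lbstate \<Rightarrow> nat \<Rightarrow> nat \<Rightarrow> real" where
  "class_frac s i m = (if i = 0 then 1 - (s 1 1 + s 1 2) else s i m - s (Suc i) m)"

text \<open>A policy: route s i m = probability that a job arriving in state s is sent to a server
  of class (i,m).\<close>
type_synonym policy = "lbstate \<Rightarrow> nat \<Rightarrow> nat \<Rightarrow> real"

definition valid_policy :: "nat \<Rightarrow> nat \<Rightarrow> policy \<Rightarrow> bool" where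
  "valid_policy N b route \<longleftrightarrow> (\<forall>s\<in>state_space N b.
      (\<forall>(i,m)\<in>classes b. 0 \<le> route s i m \<and> (0 < route s i m \<longrightarrow> 0 < class_frac s i m)) \<and>
      (\<Sum>(i,m)\<in>classes b. route s i m) = 1)"

definition A1 :: "nat \<Rightarrow> policy \<Rightarrow> lbstate \<Rightarrow> real" where
  "A1 b route s = (\<Sum>(i,m)\<in>busy_classes b. route s i m)"

definition arr_target :: "nat \<Rightarrow> nat \<Rightarrow> lbstate \<Rightarrow> nat \<Rightarrow> nat \<Rightarrow> lbstate" where
  "arr_target N b s i m =
     (if i = 0 then (\<lambda>j k. if j = 1 \<and> k = 1 then s j k + 1 / real N else s j k)
      else if i < b then (\<lambda>j k. if j = Suc i \<and> k = m then s j k + 1 / real N else s j k)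
      else s)"

definition phase_change_target :: "nat \<Rightarrow> lbstate \<Rightarrow> nat \<Rightarrow> lbstate" where
  "phase_change_target N s i = (\<lambda>j k.
     if 1 \<le> j \<and> j \<le> i then
       (if k = 1 then s j k - 1 / real N else if k = 2 then s j k + 1 / real N else s j k)
     else s j k)"

definition dep1_target :: "nat \<Rightarrow> lbstate \<Rightarrow> nat \<Rightarrow> lbstate" where
  "dep1_target N s i = (\<lambda>j k. if j = i \<and> k = 1 then s j k - 1 / real N else s j k)"

definition dep2_target :: "nat \<Rightarrow> lbstate \<Rightarrow> nat \<Rightarrow> lbstate" where
  "dep2_target N s i = (\<lambda>j k.
     if j = i \<and> k = 2 then s j k - 1 / real N
     else if 1 \<le> j \<and> j < i then
       (if k = 2 then s j k - 1 / real N else if k = 1 then s j k + 1 / real N else s j k)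
     else s j k)"

definition trans_rate :: "nat \<Rightarrow> nat \<Rightarrow> real \<Rightarrow> real \<Rightarrow> real \<Rightarrow> real \<Rightarrow> policy
    \<Rightarrow> lbstate \<Rightarrow> lbstate \<Rightarrow> real" where
  "trans_rate N b lam mu1 mu2 p route s s' =
     (\<Sum>(i,m)\<in>classes b. if arr_target N b s i m = s' then lam * real N * route s i m else 0)
   + (\<Sum>i\<in>{1..b}.
        (if phase_change_target N s i = s' then mu1 * p * real N * class_frac s i 1 else 0)
      + (if dep1_target N s i = s' then mu1 * (1 - p) * real N * class_frac s i 1 else 0)
      + (if dep2_target N s i = s' then mu2 * real N * class_frac s i 2 else 0))"

definition gen :: "nat \<Rightarrow> nat \<Rightarrow> real \<Rightarrow> real \<Rightarrow> real \<Rightarrow> real \<Rightarrow> policy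
    \<Rightarrow> lbstate \<Rightarrow> lbstate \<Rightarrow> real" where
  "gen N b lam mu1 mu2 p route s s' =
     (if s = s' then 0 else trans_rate N b lam mu1 mu2 p route s s')"

definition irreducible_chain :: "nat \<Rightarrow> nat \<Rightarrow> real \<Rightarrow> real \<Rightarrow> real \<Rightarrow> real \<Rightarrow> policy \<Rightarrow> bool" where
  "irreducible_chain N b lam mu1 mu2 p route \<longleftrightarrow>
     (\<forall>s\<in>state_space N b. \<forall>s'\<in>state_space N b.
        (s, s') \<in> {(x, y). x \<in> state_space N b \<and> y \<in> state_space N b \<and>
                          0 < gen N b lam mu1 mu2 p route x y}\<^sup>*)"

definition stationary_dist :: "nat \<Rightarrow> nat \<Rightarrow> real \<Rightarrow> real \<Rightarrow> real \<Rightarrow> real \<Rightarrow> policy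
    \<Rightarrow> (lbstate \<Rightarrow> real) \<Rightarrow> bool" where
  "stationary_dist N b lam mu1 mu2 p route \<pi> \<longleftrightarrow>
     (\<forall>s\<in>state_space N b. 0 \<le> \<pi> s) \<and>
     (\<Sum>s\<in>state_space N b. \<pi> s) = 1 \<and>
     (\<forall>s'\<in>state_space N b.
        (\<Sum>s\<in>state_space N b. \<pi> s * gen N b lam mu1 mu2 p route s s')
        = \<pi> s' * (\<Sum>s\<in>state_space N b. gen N b lam mu1 mu2 p route s' s))"

definition in_Pi :: "nat \<Rightarrow> nat \<Rightarrow> real \<Rightarrow> real \<Rightarrow> real \<Rightarrow> real \<Rightarrow> policy \<Rightarrow> bool" where
  "in_Pi N b lam mu1 mu2 p route \<longleftrightarrow>
     (\<forall>s\<in>state_space N b.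
        s 1 1 + s 1 2 \<le> lam + (1 + mu1 + mu2) / min ((1 - p) * mu1) mu2 * (ln (real N) / sqrt (real N))
        \<longrightarrow> A1 b route s \<le> 1 / sqrt (real N))"

end

theory Submission
  imports Defs
begin


lemma ss_D:
  assumes "s \<in> state_space N b"
  shows "\<And>i m. (i < 1 \<or> b < i \<or> m \<notin> {1,2}) \<Longrightarrow> s i m = 0"
    and "\<And>m. m \<in> {1,2} \<Longrightarrow> s 1 m \<le> 1"
    and "\<And>m. m \<in> {1,2} \<Longrightarrow> 0 \<le> s b m"
    and "\<And>m i. m \<in> {1,2} \<Longrightarrow> 1 \<le> i \<Longrightarrow> i < b \<Longrightarrow> s (Suc i) m \<le> s i m"
    and "s 1 1 + s 1 2 \<le> 1"
    and "\<And>i m. 1 \<le> i \<Longrightarrow> i \<le> b \<Longrightarrow> m \<in> {1,2} \<Longrightarrow> real N * s i m \<in> \<nat>"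
  using assms unfolding state_space_def by auto

lemma ss_mono:
  assumes "s \<in> state_space N b" "m \<in> {1,2}" "1 \<le> i" "i \<le> j" "j \<le> b"
  shows "s j m \<le> s i m"
  using assms(4,5)
proof (induction j rule: dec_induct)
  case base then show ?case by simp
next
  case (step j)
  have "s (Suc j) m \<le> s j m" using ss_D(4)[OF assms(1) assms(2)] step assms(3) by auto
  then show ?case using step by auto
qed

lemma ss_nonneg:
  assumes "s \<in> state_space N b" "m \<in> {1,2}"
  shows "0 \<le> s i m"
proof (cases "1 \<le> i \<and> i \<le> b")
  case True
  then show ?thesis using ss_mono[OF assms(1,2), of i b] ss_D(3)[OF assms] by auto
next
  case False
  then show ?thesis using ss_D(1)[OF assms(1)] by auto
qed

lemma ss_nonneg': "s \<in> state_space N b \<Longrightarrow> 0 \<le> s i m"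
  using ss_nonneg[of s N b m i] ss_D(1)[of s N b i m] by (cases "m \<in> {1,2}") auto

lemma ss_le1:
  assumes "s \<in> state_space N b" "m \<in> {1,2}" "1 \<le> i"
  shows "s i m \<le> 1"
proof (cases "i \<le> b")
  case True
  then show ?thesis using ss_mono[OF assms(1,2), of 1 i] ss_D(2)[OF assms(1,2)] assms by auto
next
  case False
  then show ?thesis using ss_D(1)[OF assms(1)] by auto
qed

lemma cf_nonneg:
  assumes "s \<in> state_space N b" "(i,m) \<in> classes b"
  shows "0 \<le> class_frac s i m"
proof -
  have "i = 0 \<or> (1 \<le> i \<and> i \<le> b \<and> m \<in> {1,2})" using assms(2) unfolding classes_def busy_classes_def by auto
  then show ?thesis
  proof
    assume "i = 0" then show ?thesis using ss_D(5)[OF assms(1)] by (simp add: class_frac_def)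
  next
    assume h: "1 \<le> i \<and> i \<le> b \<and> m \<in> {1,2}"
    show ?thesis
    proof (cases "i < b")
      case True then show ?thesis using ss_D(4)[OF assms(1), of m i] h by (simp add: class_frac_def)
    next
      case False
      then have "s (Suc i) m = 0" using ss_D(1)[OF assms(1)] h by auto
      then show ?thesis using ss_nonneg[OF assms(1), of m i] h by (simp add: class_frac_def)
    qed
  qed
qed

lemma cf_telescope:
  assumes "s \<in> state_space N b" "m \<in> {1,2}" "1 \<le> b"
  shows "(\<Sum>i\<in>{1..b}. class_frac s i m) = s 1 m"
proof -
  have "(\<Sum>i\<in>{1..b}. class_frac s i m) = (\<Sum>i\<in>{1..b}. s i m - s (Suc i) m)"
    by (rule sum.cong) (auto simp: class_frac_def)
  also have "\<dots> = - (\<Sum>i\<in>{1..b}. s (Suc i) m - s i m)"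
    by (simp add: sum_negf[symmetric])
  also have "\<dots> = - (s (Suc b) m - s 1 m)" using sum_Suc_diff[of 1 b "\<lambda>i. s i m"] assms(3) by simp
  also have "s (Suc b) m = 0" using ss_D(1)[OF assms(1)] by auto
  finally show ?thesis by simp
qed

lemma nat_ge1:
  assumes "real N * x \<in> \<nat>" "0 < x" "0 < N"
  shows "1 \<le> real N * x"
proof -
  obtain n where n: "real N * x = real n" using assms(1) Nats_cases by metis
  have "0 < real N * x" using assms by simp
  then have "0 < n" using n by simp
  then show ?thesis using n by simp
qed

lemma nat_gap:
  assumes "real N * x \<in> \<nat>" "real N * y \<in> \<nat>" "y < x" "0 < N"
  shows "1 \<le> real N * x - real N * y"
proof -
  obtain n where n: "real N * x = real n" using assms(1) Nats_cases by metis
  obtain k where k: "real N * y = real k" using assms(2) Nats_cases by metis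
  have "real N * y < real N * x" using assms by simp
  then have "k < n" using n k by simp
  then show ?thesis using n k by simp
qed



lemma arr_12: "arr_target N b s i m 1 2 = s 1 2"
  by (simp add: arr_target_def)
lemma dep1_12: "dep1_target N s i 1 2 = s 1 2"
  by (simp add: dep1_target_def)
lemma pc_12: "1 \<le> i \<Longrightarrow> phase_change_target N s i 1 2 = s 1 2 + 1 / real N"
  by (simp add: phase_change_target_def)
lemma dep2_12: "1 \<le> i \<Longrightarrow> dep2_target N s i 1 2 = s 1 2 - 1 / real N"
  by (auto simp add: dep2_target_def)

lemma dep2_in:
  assumes s: "s \<in> state_space N b" and i: "1 \<le> i" "i \<le> b" and cf: "0 < class_frac s i 2" and N: "0 < N"
  shows "dep2_target N s i \<in> state_space N b"
proof -
  let ?t = "dep2_target N s i"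
  have cf': "s (Suc i) 2 < s i 2" using cf i by (simp add: class_frac_def)
  have Nsi: "real N * s i 2 \<in> \<nat>" using ss_D(6)[OF s] i by auto
  have si0: "0 < s i 2" using cf' ss_nonneg'[OF s, of "Suc i" 2] by simp
  have j2: "1 / real N \<le> s j 2" if "1 \<le> j" "j \<le> i" for j
  proof -
    have "s i 2 \<le> s j 2" using ss_mono[OF s, of 2 j i] that i by auto
    moreover have "1 \<le> real N * s i 2" using nat_ge1[OF Nsi si0 N] .
    ultimately have "1 \<le> real N * s j 2" using N
      by (smt (verit) mult_left_mono of_nat_0_le_iff)
    then show ?thesis using N by (simp add: field_simps)
  qed
  have gap: "1 / real N \<le> s i 2 - s (Suc i) 2"
  proof (cases "i < b")
    case True
    have "1 \<le> real N * s i 2 - real N * s (Suc i) 2"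
      by (rule nat_gap[OF Nsi _ cf' N]) (use ss_D(6)[OF s, of "Suc i" 2] True in auto)
    then show ?thesis using N by (simp add: field_simps)
  next
    case False
    then have "s (Suc i) 2 = 0" using ss_D(1)[OF s] by auto
    then show ?thesis using j2[of i] i by auto
  qed
  have t: "?t j k = (if j = i \<and> k = 2 then s j k - 1 / real N
     else if 1 \<le> j \<and> j < i then
       (if k = 2 then s j k - 1 / real N else if k = 1 then s j k + 1 / real N else s j k)
     else s j k)" for j k by (simp add: dep2_target_def)
  have s11: "s 1 1 + 1 / real N \<le> 1" if "1 < i"
    using ss_D(5)[OF s] j2[of 1] that by auto
  show ?thesis unfolding state_space_def
  proof (intro CollectI conjI ballI allI impI)
    fix j k assume "j < 1 \<or> b < j \<or> k \<notin> {1, 2::nat}"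
    then show "?t j k = 0" using ss_D(1)[OF s] i unfolding t by auto
  next
    fix m :: nat assume m: "m \<in> {1,2}"
    have inv: "0 \<le> 1 / real N" by simp
    show "?t 1 m \<le> 1"
    proof (cases "m = 1")
      case True then show ?thesis using ss_D(2)[OF s m] s11 i unfolding t by auto
    next
      case False then have "m = 2" using m by auto
      then show ?thesis using ss_D(2)[OF s m] inv unfolding t by (auto simp del: divide_nonneg_nonneg zero_le_divide_1_iff) 
    qed
    show "0 \<le> ?t b m" using m ss_D(3)[OF s m] i gap ss_nonneg'[OF s, of "Suc i" 2] unfolding t by auto
  next
    fix m :: nat and j assume m: "m \<in> {1,2}" and j: "j \<in> {1..<b}"
    have mo: "s (Suc j) m \<le> s j m" using ss_D(4)[OF s m] j by auto
    show "?t (Suc j) m \<le> ?t j m"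
    proof -
      consider "Suc j < i" | "Suc j = i" | "j = i" | "i < j" by linarith
      then show ?thesis
      proof cases
        case 1 then show ?thesis using mo m j unfolding t by auto
      next
        case 2 then show ?thesis using mo m j N unfolding t by (auto intro: add_increasing2)
      next
        case 3 then show ?thesis using mo m j gap unfolding t by auto
      next
        case 4 then show ?thesis using mo m j unfolding t by auto
      qed
    qed
  next
    have inv: "0 \<le> 1 / real N" by simp
    show "?t 1 1 + ?t 1 2 \<le> 1" using ss_D(5)[OF s] i unfolding t by (auto simp del: divide_nonneg_nonneg zero_le_divide_1_iff; use inv in linarith)
  next
    fix j and m :: nat assume j: "j \<in> {1..b}" and m: "m \<in> {1,2}"
    have base: "real N * s j m \<in> \<nat>" using ss_D(6)[OF s] j m by auto
    have plus: "real N * (s j m + 1 / real N) \<in> \<nat>"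
    proof -
      have "real N * (s j m + 1 / real N) = real N * s j m + 1" using N by (simp add: field_simps)
      then show ?thesis using base by (metis Nats_1 Nats_add)
    qed
    have minus: "real N * (s j m - 1 / real N) \<in> \<nat>" if "1 / real N \<le> s j m"
    proof -
      obtain n where n: "real N * s j m = real n" using base Nats_cases by metis
      have "1 \<le> real N * s j m" using that N by (simp add: field_simps)
      then have "1 \<le> n" using n by simp
      have "real N * (s j m - 1 / real N) = real N * s j m - 1" using N by (simp add: field_simps)
      also have "\<dots> = real (n - 1)" using n \<open>1 \<le> n\<close> by simp
      finally show ?thesis by simp
    qed
    show "real N * ?t j m \<in> \<nat>"
      unfolding t using base plus minus j2 j m by auto
  qed
qed



definition Kf :: "nat \<Rightarrow> lbstate \<Rightarrow> nat" where "Kf N s = nat \<lfloor>real N * s 1 2\<rfloor>"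

lemma Kf_real:
  assumes "s \<in> state_space N b" "1 \<le> b"
  shows "real (Kf N s) = real N * s 1 2"
proof -
  obtain n where n: "real N * s 1 2 = real n" using ss_D(6)[OF assms(1), of 1 2] assms(2) Nats_cases by auto
  show ?thesis unfolding Kf_def n by simp
qed

lemma Kf_le:
  assumes "s \<in> state_space N b" "1 \<le> b"
  shows "Kf N s \<le> N"
proof -
  have "s 1 2 \<le> 1" using ss_D(2)[OF assms(1)] by auto
  then have "real N * s 1 2 \<le> real N" by (simp add: mult_left_le)
  then show ?thesis using Kf_real[OF assms] by linarith
qed

lemma cf_classes: "1 \<le> i \<Longrightarrow> i \<le> b \<Longrightarrow> m \<in> {1,2} \<Longrightarrow> (i,m) \<in> classes b"
  unfolding classes_def busy_classes_def by auto

lemma tr_nonneg: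
  assumes s: "s \<in> state_space N b" and vp: "valid_policy N b route"
    and "0 \<le> lam" "0 \<le> mu1" "0 \<le> mu2" "0 \<le> p" "p \<le> 1"
  shows "0 \<le> trans_rate N b lam mu1 mu2 p route s s'"
  unfolding trans_rate_def
proof (intro add_nonneg_nonneg sum_nonneg)
  fix x assume x: "x \<in> classes b"
  obtain i m where im: "x = (i,m)" by fastforce
  have "0 \<le> route s i m" using vp s x im unfolding valid_policy_def by fastforce
  then show "0 \<le> (case x of (i, m) \<Rightarrow> if arr_target N b s i m = s' then lam * real N * route s i m else 0)"
    using im assms by auto
next
  fix i assume i: "i \<in> {1..b}"
  have c1: "0 \<le> class_frac s i 1" by (rule cf_nonneg[OF s cf_classes]) (use i in auto)
  have c2: "0 \<le> class_frac s i 2" by (rule cf_nonneg[OF s cf_classes]) (use i in auto)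
  show "0 \<le> (if phase_change_target N s i = s' then mu1 * p * real N * class_frac s i 1 else 0)"
    using c1 assms by auto
  show "0 \<le> (if dep1_target N s i = s' then mu1 * (1 - p) * real N * class_frac s i 1 else 0)"
    using c1 assms by auto
  show "0 \<le> (if dep2_target N s i = s' then mu2 * real N * class_frac s i 2 else 0)"
    using c2 assms by auto
qed

lemma cut_eq:
  fixes \<pi> :: "'a \<Rightarrow> real"
  assumes "finite S" "A \<subseteq> S"
    and bal: "\<forall>s'\<in>S. (\<Sum>s\<in>S. \<pi> s * g s s') = \<pi> s' * (\<Sum>s\<in>S. g s' s)"
  shows "(\<Sum>s\<in>S-A. \<pi> s * (\<Sum>s'\<in>A. g s s')) = (\<Sum>s'\<in>A. \<pi> s' * (\<Sum>s\<in>S-A. g s' s))"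
proof -
  have fA: "finite A" using assms finite_subset by blast
  have fB: "finite (S-A)" using assms by blast
  have S: "S = A \<union> (S-A)" using assms by blast
  have "(\<Sum>s'\<in>A. \<Sum>s\<in>S. \<pi> s * g s s') = (\<Sum>s'\<in>A. \<pi> s' * (\<Sum>s\<in>S. g s' s))"
    using bal assms(2) by (intro sum.cong) auto
  moreover have "(\<Sum>s'\<in>A. \<Sum>s\<in>S. \<pi> s * g s s') = (\<Sum>s'\<in>A. \<Sum>s\<in>A. \<pi> s * g s s') + (\<Sum>s'\<in>A. \<Sum>s\<in>S-A. \<pi> s * g s s')"
    by (subst S, subst sum.union_disjoint) (use fA fB in \<open>auto simp: sum.distrib\<close>)
  moreover have "(\<Sum>s'\<in>A. \<pi> s' * (\<Sum>s\<in>S. g s' s)) = (\<Sum>s'\<in>A. \<pi> s' * (\<Sum>s\<in>A. g s' s)) + (\<Sum>s'\<in>A. \<pi> s' * (\<Sum>s\<in>S-A. g s' s))"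
    by (subst S, subst sum.union_disjoint) (use fA fB in \<open>auto simp: sum.distrib distrib_left\<close>)
  moreover have "(\<Sum>s'\<in>A. \<Sum>s\<in>A. \<pi> s * g s s') = (\<Sum>s'\<in>A. \<pi> s' * (\<Sum>s\<in>A. g s' s))"
    by (subst sum.swap) (simp add: sum_distrib_left)
  moreover have "(\<Sum>s'\<in>A. \<Sum>s\<in>S-A. \<pi> s * g s s') = (\<Sum>s\<in>S-A. \<pi> s * (\<Sum>s'\<in>A. g s s'))"
    by (subst sum.swap) (simp add: sum_distrib_left)
  ultimately show ?thesis by linarith
qed



lemma tr_ge_dep2:
  assumes s: "s \<in> state_space N b" and vp: "valid_policy N b route"
    and "0 \<le> lam" "0 \<le> mu1" "0 \<le> mu2" "0 \<le> p" "p \<le> 1"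
  shows "(\<Sum>i\<in>{1..b}. if dep2_target N s i = s' then mu2 * real N * class_frac s i 2 else 0)
         \<le> trans_rate N b lam mu1 mu2 p route s s'"
proof -
  let ?X = "(\<Sum>(i,m)\<in>classes b. if arr_target N b s i m = s' then lam * real N * route s i m else 0)"
  have X: "0 \<le> ?X"
  proof (intro sum_nonneg)
    fix x assume x: "x \<in> classes b"
    obtain i m where im: "x = (i,m)" by fastforce
    have "0 \<le> route s i m" using vp s x im unfolding valid_policy_def by fastforce
    then show "0 \<le> (case x of (i, m) \<Rightarrow> if arr_target N b s i m = s' then lam * real N * route s i m else 0)"
      using im assms by auto
  qed
  have "(\<Sum>i\<in>{1..b}. if dep2_target N s i = s' then mu2 * real N * class_frac s i 2 else 0)
     \<le> (\<Sum>i\<in>{1..b}.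
        (if phase_change_target N s i = s' then mu1 * p * real N * class_frac s i 1 else 0)
      + (if dep1_target N s i = s' then mu1 * (1 - p) * real N * class_frac s i 1 else 0)
      + (if dep2_target N s i = s' then mu2 * real N * class_frac s i 2 else 0))"
  proof (rule sum_mono)
    fix i assume i: "i \<in> {1..b}"
    have c1: "0 \<le> class_frac s i 1" by (rule cf_nonneg[OF s cf_classes]) (use i in auto)
    show "(if dep2_target N s i = s' then mu2 * real N * class_frac s i 2 else 0)
       \<le> (if phase_change_target N s i = s' then mu1 * p * real N * class_frac s i 1 else 0)
      + (if dep1_target N s i = s' then mu1 * (1 - p) * real N * class_frac s i 1 else 0)
      + (if dep2_target N s i = s' then mu2 * real N * class_frac s i 2 else 0)"
      using c1 assms by auto
  qed
  then show ?thesis using X unfolding trans_rate_def by linarith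
qed

lemma tr_up:
  assumes s': "s' \<in> state_space N b" and lt: "s' 1 2 < s 1 2" and N: "0 < N"
  shows "trans_rate N b lam mu1 mu2 p route s' s
     = (\<Sum>i\<in>{1..b}. if phase_change_target N s' i = s then mu1 * p * real N * class_frac s' i 1 else 0)"
proof -
  have a: "arr_target N b s' i m \<noteq> s" for i m using arr_12[of N b s' i m] lt by auto
  have d1: "dep1_target N s' i \<noteq> s" for i using dep1_12[of N s' i] lt by auto
  have d2: "dep2_target N s' i \<noteq> s" if "1 \<le> i" for i
  proof -
    have "0 < 1 / real N" using N by simp
    then show ?thesis using dep2_12[OF that, of N s'] lt by auto
  qed
  show ?thesis unfolding trans_rate_def using a d1 d2
    by (auto intro!: sum.neutral sum.cong simp: case_prod_beta)
qed



lemma down_bound: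
  assumes s: "s \<in> state_space N b" and vp: "valid_policy N b route"
    and r: "0 \<le> lam" "0 \<le> mu1" "0 \<le> mu2" "0 \<le> p" "p \<le> 1"
    and N: "0 < N" and b: "1 \<le> b" and fin: "finite (state_space N b)" and K: "Kf N s = Suc k"
  shows "mu2 * real (Suc k) \<le> (\<Sum>s'\<in>{x\<in>state_space N b. Kf N x \<le> k}. gen N b lam mu1 mu2 p route s s')"
proof -
  let ?A = "{x\<in>state_space N b. Kf N x \<le> k}"
  let ?c = "\<lambda>i s'. if dep2_target N s i = s' then mu2 * real N * class_frac s i 2 else 0"
  have fA: "finite ?A" using fin by simp
  have "(\<Sum>s'\<in>?A. \<Sum>i\<in>{1..b}. ?c i s') \<le> (\<Sum>s'\<in>?A. gen N b lam mu1 mu2 p route s s')"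
  proof (rule sum_mono)
    fix s' assume "s' \<in> ?A"
    then have "s' \<noteq> s" using K by auto
    then show "(\<Sum>i\<in>{1..b}. ?c i s') \<le> gen N b lam mu1 mu2 p route s s'"
      unfolding gen_def using tr_ge_dep2[OF s vp r, of s'] by auto
  qed
  moreover have "(\<Sum>s'\<in>?A. \<Sum>i\<in>{1..b}. ?c i s') = (\<Sum>i\<in>{1..b}. \<Sum>s'\<in>?A. ?c i s')"
    by (rule sum.swap)
  moreover have "(\<Sum>i\<in>{1..b}. \<Sum>s'\<in>?A. ?c i s') = (\<Sum>i\<in>{1..b}. mu2 * real N * class_frac s i 2)"
  proof (rule sum.cong[OF refl])
    fix i assume i: "i \<in> {1..b}"
    have "(\<Sum>s'\<in>?A. ?c i s') = (if dep2_target N s i \<in> ?A then mu2 * real N * class_frac s i 2 else 0)"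
      using sum.delta'[OF fA, of "dep2_target N s i" "\<lambda>_. mu2 * real N * class_frac s i 2"] by simp
    also have "\<dots> = mu2 * real N * class_frac s i 2"
    proof (cases "class_frac s i 2 = 0")
      case True then show ?thesis by simp
    next
      case False
      then have pos: "0 < class_frac s i 2" using cf_nonneg[OF s cf_classes[of i b 2]] i by auto
      have t: "dep2_target N s i \<in> state_space N b" by (rule dep2_in[OF s _ _ pos N]) (use i in auto)
      have "real (Kf N (dep2_target N s i)) = real N * (s 1 2 - 1 / real N)"
        using Kf_real[OF t b] dep2_12[of i N s] i by simp
      also have "\<dots> = real N * s 1 2 - 1" using N by (simp add: field_simps)
      also have "\<dots> = real k" using Kf_real[OF s b] K by simp
      finally have "Kf N (dep2_target N s i) = k" by simp
      then show ?thesis using t by simp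
    qed
    finally show "(\<Sum>s'\<in>?A. ?c i s') = mu2 * real N * class_frac s i 2" .
  qed
  moreover have "(\<Sum>i\<in>{1..b}. mu2 * real N * class_frac s i 2) = mu2 * real (Suc k)"
    using cf_telescope[OF s _ b, of 2] Kf_real[OF s b] K by (simp add: sum_distrib_left[symmetric])
  ultimately show ?thesis by linarith
qed

lemma up_bound:
  assumes s': "s' \<in> state_space N b" and vp: "valid_policy N b route"
    and r: "0 \<le> mu1" "0 \<le> p"
    and N: "0 < N" and b: "1 \<le> b" and fin: "finite (state_space N b)" and K: "Kf N s' \<le> k"
  shows "(\<Sum>s\<in>state_space N b - {x\<in>state_space N b. Kf N x \<le> k}. gen N b lam mu1 mu2 p route s' s)
     \<le> (if Kf N s' = k then mu1 * p * (real N - real k) else 0)"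
proof -
  let ?B = "state_space N b - {x\<in>state_space N b. Kf N x \<le> k}"
  let ?c = "\<lambda>i s. if phase_change_target N s' i = s then mu1 * p * real N * class_frac s' i 1 else 0"
  have fB: "finite ?B" using fin by simp
  have "(\<Sum>s\<in>?B. gen N b lam mu1 mu2 p route s' s) = (\<Sum>s\<in>?B. \<Sum>i\<in>{1..b}. ?c i s)"
  proof (rule sum.cong[OF refl])
    fix s assume sB: "s \<in> ?B"
    then have ss: "s \<in> state_space N b" and "k < Kf N s" by auto
    then have "real (Kf N s') < real (Kf N s)" using K by simp
    then have "real N * s' 1 2 < real N * s 1 2" using Kf_real[OF s' b] Kf_real[OF ss b] by simp
    then have lt: "s' 1 2 < s 1 2" using N by simp
    then have "s' \<noteq> s" by auto
    then show "gen N b lam mu1 mu2 p route s' s = (\<Sum>i\<in>{1..b}. ?c i s)"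
      unfolding gen_def using tr_up[of s' N b s lam mu1 mu2 p route, OF s' lt N] by simp
  qed
  also have "\<dots> = (\<Sum>i\<in>{1..b}. \<Sum>s\<in>?B. ?c i s)" by (rule sum.swap)
  also have "\<dots> \<le> (\<Sum>i\<in>{1..b}. if Kf N s' = k then mu1 * p * real N * class_frac s' i 1 else 0)"
  proof (rule sum_mono)
    fix i assume i: "i \<in> {1..b}"
    have c1: "0 \<le> class_frac s' i 1" by (rule cf_nonneg[OF s' cf_classes]) (use i in auto)
    have "(\<Sum>s\<in>?B. ?c i s) = (if phase_change_target N s' i \<in> ?B then mu1 * p * real N * class_frac s' i 1 else 0)"
      using sum.delta'[OF fB, of "phase_change_target N s' i" "\<lambda>_. mu1 * p * real N * class_frac s' i 1"] by simp
    also have "\<dots> \<le> (if Kf N s' = k then mu1 * p * real N * class_frac s' i 1 else 0)"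
    proof (cases "phase_change_target N s' i \<in> ?B")
      case True
      then have t: "phase_change_target N s' i \<in> state_space N b" and gt: "k < Kf N (phase_change_target N s' i)" by auto
      have "real (Kf N (phase_change_target N s' i)) = real N * (s' 1 2 + 1 / real N)"
        using Kf_real[OF t b] pc_12[of i N s'] i by simp
      also have "\<dots> = real N * s' 1 2 + 1" using N by (simp add: field_simps)
      also have "\<dots> = real (Kf N s') + 1" using Kf_real[OF s' b] by simp
      finally have "Kf N (phase_change_target N s' i) = Suc (Kf N s')" by simp
      then have "Kf N s' = k" using gt K by simp
      then show ?thesis using True by simp
    next
      case False
      have "0 \<le> mu1 * p * real N * class_frac s' i 1" using c1 r by (intro mult_nonneg_nonneg) auto
      then show ?thesis using False by simp
    qed
    finally show "(\<Sum>s\<in>?B. ?c i s) \<le> (if Kf N s' = k then mu1 * p * real N * class_frac s' i 1 else 0)" .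
  qed
  also have "\<dots> \<le> (if Kf N s' = k then mu1 * p * (real N - real k) else 0)"
  proof (cases "Kf N s' = k")
    case True
    have "(\<Sum>i\<in>{1..b}. mu1 * p * real N * class_frac s' i 1) = mu1 * p * real N * s' 1 1"
      using cf_telescope[OF s' _ b, of 1] by (simp add: sum_distrib_left[symmetric])
    also have "\<dots> \<le> mu1 * p * (real N - real k)"
    proof -
      have "real N * s' 1 1 \<le> real N * (1 - s' 1 2)" using ss_D(5)[OF s'] by (simp add: mult_left_mono)
      also have "\<dots> = real N - real k" using Kf_real[OF s' b] True by (simp add: algebra_simps)
      finally have "real N * s' 1 1 \<le> real N - real k" .
      then have "mu1 * p * (real N * s' 1 1) \<le> mu1 * p * (real N - real k)"
        using r by (simp add: mult_left_mono)
      then show ?thesis by (simp add: mult.assoc)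
    qed
    finally show ?thesis using True by simp
  next
    case False then show ?thesis by simp
  qed
  finally show ?thesis .
qed



lemma gen_nonneg:
  assumes s: "s \<in> state_space N b" and vp: "valid_policy N b route"
    and "0 \<le> lam" "0 \<le> mu1" "0 \<le> mu2" "0 \<le> p" "p \<le> 1"
  shows "0 \<le> gen N b lam mu1 mu2 p route s s'"
  unfolding gen_def using tr_nonneg[OF assms] by simp

lemma recur:
  assumes vp: "valid_policy N b route"
    and r: "0 \<le> lam" "0 \<le> mu1" "0 \<le> mu2" "0 \<le> p" "p \<le> 1"
    and N: "0 < N" and b: "1 \<le> b" and fin: "finite (state_space N b)"
    and st: "stationary_dist N b lam mu1 mu2 p route \<pi>"
  shows "mu2 * real (Suc k) * (\<Sum>s\<in>{x\<in>state_space N b. Kf N x = Suc k}. \<pi> s)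
       \<le> mu1 * p * (real N - real k) * (\<Sum>s\<in>{x\<in>state_space N b. Kf N x = k}. \<pi> s)"
proof -
  let ?S = "state_space N b"
  let ?A = "{x\<in>?S. Kf N x \<le> k}"
  let ?g = "gen N b lam mu1 mu2 p route"
  have pos: "\<forall>s\<in>?S. 0 \<le> \<pi> s" and bal: "\<forall>s'\<in>?S. (\<Sum>s\<in>?S. \<pi> s * ?g s s') = \<pi> s' * (\<Sum>s\<in>?S. ?g s' s)"
    using st unfolding stationary_dist_def by auto
  have cut: "(\<Sum>s\<in>?S-?A. \<pi> s * (\<Sum>s'\<in>?A. ?g s s')) = (\<Sum>s'\<in>?A. \<pi> s' * (\<Sum>s\<in>?S-?A. ?g s' s))"
    by (rule cut_eq[OF fin _ bal]) auto
  have "(\<Sum>s\<in>?S-?A. \<pi> s * (if Kf N s = Suc k then mu2 * real (Suc k) else 0))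
        \<le> (\<Sum>s\<in>?S-?A. \<pi> s * (\<Sum>s'\<in>?A. ?g s s'))"
  proof (rule sum_mono)
    fix s assume s: "s \<in> ?S - ?A"
    have "(if Kf N s = Suc k then mu2 * real (Suc k) else 0) \<le> (\<Sum>s'\<in>?A. ?g s s')"
      using down_bound[OF _ vp r N b fin, of s k] gen_nonneg[OF _ vp r] s
      by (auto intro!: sum_nonneg)
    then show "\<pi> s * (if Kf N s = Suc k then mu2 * real (Suc k) else 0) \<le> \<pi> s * (\<Sum>s'\<in>?A. ?g s s')"
      using pos s by (intro mult_left_mono) auto
  qed
  moreover have "(\<Sum>s\<in>?S-?A. \<pi> s * (if Kf N s = Suc k then mu2 * real (Suc k) else 0))
      = mu2 * real (Suc k) * (\<Sum>s\<in>{x\<in>?S. Kf N x = Suc k}. \<pi> s)"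
  proof -
    have "(\<Sum>s\<in>?S-?A. \<pi> s * (if Kf N s = Suc k then mu2 * real (Suc k) else 0))
        = (\<Sum>s\<in>?S. if Kf N s = Suc k then mu2 * real (Suc k) * \<pi> s else 0)"
      using fin by (intro sum.mono_neutral_cong_left) auto
    also have "\<dots> = (\<Sum>s\<in>{x\<in>?S. Kf N x = Suc k}. mu2 * real (Suc k) * \<pi> s)"
      by (rule sum.inter_filter[OF fin, symmetric])
    finally show ?thesis by (simp add: sum_distrib_left)
  qed
  moreover have "(\<Sum>s'\<in>?A. \<pi> s' * (\<Sum>s\<in>?S-?A. ?g s' s))
      \<le> (\<Sum>s'\<in>?A. \<pi> s' * (if Kf N s' = k then mu1 * p * (real N - real k) else 0))"
  proof (rule sum_mono)
    fix s' assume s': "s' \<in> ?A"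
    show "\<pi> s' * (\<Sum>s\<in>?S-?A. ?g s' s) \<le> \<pi> s' * (if Kf N s' = k then mu1 * p * (real N - real k) else 0)"
      using up_bound[of s' N b route mu1 p k lam mu2] s' vp r N b fin pos
      by (intro mult_left_mono) auto
  qed
  moreover have "(\<Sum>s'\<in>?A. \<pi> s' * (if Kf N s' = k then mu1 * p * (real N - real k) else 0))
      = mu1 * p * (real N - real k) * (\<Sum>s\<in>{x\<in>?S. Kf N x = k}. \<pi> s)"
  proof -
    have "(\<Sum>s'\<in>?A. \<pi> s' * (if Kf N s' = k then mu1 * p * (real N - real k) else 0))
        = (\<Sum>s\<in>?S. if Kf N s = k then mu1 * p * (real N - real k) * \<pi> s else 0)"
      using fin by (intro sum.mono_neutral_cong_left) auto
    also have "\<dots> = (\<Sum>s\<in>{x\<in>?S. Kf N x = k}. mu1 * p * (real N - real k) * \<pi> s)"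
      by (rule sum.inter_filter[OF fin, symmetric])
    finally show ?thesis by (simp add: sum_distrib_left)
  qed
  ultimately show ?thesis using cut by linarith
qed



lemma choose_rec: "Suc k * (n choose Suc k) = (n - k) * (n choose k)"
  using binomial_absorption[of k n] binomial_absorb_comp[of n k] by simp

definition Wb :: "nat \<Rightarrow> real \<Rightarrow> real \<Rightarrow> nat \<Rightarrow> real" where
  "Wb N a c k = real (N choose k) * a ^ k * c ^ (N - k)"

lemma Wb_rec:
  assumes "k < N"
  shows "c * real (Suc k) * Wb N a c (Suc k) = a * (real N - real k) * Wb N a c k"
proof -
  have e: "real (Suc k) * real (N choose Suc k) = (real N - real k) * real (N choose k)"
    using arg_cong[OF choose_rec[of k N], of real] assms by (simp add: of_nat_diff algebra_simps)
  have ck: "c ^ (N - k) = c * c ^ (N - Suc k)" using assms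
    by (metis Suc_diff_Suc power_Suc)
  have "c * real (Suc k) * Wb N a c (Suc k) = (real (Suc k) * real (N choose Suc k)) * a ^ Suc k * (c * c ^ (N - Suc k))"
    unfolding Wb_def by (simp add: algebra_simps)
  also have "\<dots> = a * (real N - real k) * Wb N a c k" unfolding e Wb_def ck by (simp add: algebra_simps)
  finally show ?thesis .
qed

lemma Wb_nonneg: "0 \<le> a \<Longrightarrow> 0 \<le> c \<Longrightarrow> 0 \<le> Wb N a c k"
  unfolding Wb_def by simp

lemma lr_dom:
  fixes P :: "nat \<Rightarrow> real"
  assumes rec: "\<And>k. c * real (Suc k) * P (Suc k) \<le> a * (real N - real k) * P k"
    and Pz: "\<And>k. N < k \<Longrightarrow> P k = 0" and Pn: "\<And>k. 0 \<le> P k"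
    and a: "0 \<le> a" and c: "0 < c"
    and ij: "i \<le> j"
  shows "P j * Wb N a c i \<le> P i * Wb N a c j"
  using ij
proof (induction j rule: dec_induct)
  case base then show ?case by simp
next
  case (step j)
  show ?case
  proof (cases "j < N")
    case True
    have W: "0 \<le> Wb N a c i" using Wb_nonneg a c by simp
    have "c * real (Suc j) * (P (Suc j) * Wb N a c i) = (c * real (Suc j) * P (Suc j)) * Wb N a c i" by simp
    also have "\<dots> \<le> (a * (real N - real j) * P j) * Wb N a c i" using rec[of j] W by (rule mult_right_mono)
    also have "\<dots> = (a * (real N - real j)) * (P j * Wb N a c i)" by simp
    also have "\<dots> \<le> (a * (real N - real j)) * (P i * Wb N a c j)"
      using step.IH a True by (intro mult_left_mono) auto
    also have "\<dots> = P i * (a * (real N - real j) * Wb N a c j)" by simp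
    also have "\<dots> = P i * (c * real (Suc j) * Wb N a c (Suc j))" using Wb_rec[OF True] by simp
    also have "\<dots> = c * real (Suc j) * (P i * Wb N a c (Suc j))" by simp
    finally show ?thesis using c by (simp del: of_nat_Suc)
  next
    case False
    then have "P (Suc j) = 0" using Pz by simp
    then show ?thesis using Pn Wb_nonneg[OF a, of c N] c by simp
  qed
qed

lemma tail_dom:
  fixes P :: "nat \<Rightarrow> real" and T :: real
  assumes rec: "\<And>k. c * real (Suc k) * P (Suc k) \<le> a * (real N - real k) * P k"
    and Pz: "\<And>k. N < k \<Longrightarrow> P k = 0" and Pn: "\<And>k. 0 \<le> P k"
    and a: "0 \<le> a" and c: "0 < c" and tot: "(\<Sum>k\<le>N. P k) = 1"
  shows "(\<Sum>k\<in>{k. k \<le> N \<and> T < real k}. P k) * (a + c) ^ N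
      \<le> (\<Sum>k\<in>{k. k \<le> N \<and> T < real k}. Wb N a c k)"
proof -
  let ?H = "{k. k \<le> N \<and> T < real k}" and ?L = "{k. k \<le> N \<and> \<not> T < real k}"
  have fH: "finite ?H" and fL: "finite ?L" by auto
  have U: "{..N} = ?H \<union> ?L" and D: "?H \<inter> ?L = {}" by auto
  have Wt: "(\<Sum>k\<le>N. Wb N a c k) = (a + c) ^ N"
    unfolding Wb_def binomial_ring by (simp add: mult.commute mult.left_commute)
  have split: "(\<Sum>k\<le>N. f k) = (\<Sum>k\<in>?H. f k) + (\<Sum>k\<in>?L. f k)" for f :: "nat \<Rightarrow> real"
    unfolding U by (rule sum.union_disjoint[OF fH fL D])
  have "(\<Sum>j\<in>?H. \<Sum>i\<in>?L. P j * Wb N a c i) \<le> (\<Sum>j\<in>?H. \<Sum>i\<in>?L. P i * Wb N a c j)"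
  proof (intro sum_mono)
    fix j i assume "j \<in> ?H" "i \<in> ?L"
    then have "i \<le> j" by auto
    then show "P j * Wb N a c i \<le> P i * Wb N a c j" using lr_dom[of c P a N, OF rec Pz Pn a c] by blast
  qed
  then have "(\<Sum>j\<in>?H. P j) * (\<Sum>i\<in>?L. Wb N a c i) \<le> (\<Sum>i\<in>?L. P i) * (\<Sum>j\<in>?H. Wb N a c j)"
    by (simp add: sum_product sum.swap[of _ ?H ?L] mult.commute)
  moreover have "(\<Sum>i\<in>?L. P i) = 1 - (\<Sum>j\<in>?H. P j)" using split[of P] tot by simp
  moreover have "(\<Sum>i\<in>?L. Wb N a c i) = (a + c) ^ N - (\<Sum>j\<in>?H. Wb N a c j)" using split[of "Wb N a c"] Wt by simp
  ultimately show ?thesis by (simp add: algebra_simps)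
qed

lemma chernoff_W:
  fixes T \<theta> :: real
  assumes a: "0 \<le> a" and c: "0 \<le> c" and th: "0 \<le> \<theta>"
  shows "(\<Sum>k\<in>{k. k \<le> N \<and> T < real k}. Wb N a c k) \<le> exp (- \<theta> * T) * (a * exp \<theta> + c) ^ N"
proof -
  have "(\<Sum>k\<in>{k. k \<le> N \<and> T < real k}. Wb N a c k) \<le> (\<Sum>k\<in>{k. k \<le> N \<and> T < real k}. Wb N a c k * exp (\<theta> * (real k - T)))"
  proof (rule sum_mono)
    fix k assume "k \<in> {k. k \<le> N \<and> T < real k}"
    then have "1 \<le> exp (\<theta> * (real k - T))" using th by auto
    then show "Wb N a c k \<le> Wb N a c k * exp (\<theta> * (real k - T))"
      using Wb_nonneg[OF a c] by (metis mult_left_mono mult.right_neutral)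
  qed
  also have "\<dots> \<le> (\<Sum>k\<le>N. Wb N a c k * exp (\<theta> * (real k - T)))"
    using Wb_nonneg[OF a c] by (intro sum_mono2) auto
  also have "\<dots> = exp (- \<theta> * T) * (\<Sum>k\<le>N. real (N choose k) * (a * exp \<theta>) ^ k * c ^ (N - k))"
    unfolding sum_distrib_left
  proof (rule sum.cong[OF refl])
    fix k
    have "exp (\<theta> * (real k - T)) = exp (- \<theta> * T) * exp \<theta> ^ k"
      by (simp add: exp_of_nat_mult[symmetric] algebra_simps exp_add[symmetric] exp_diff)
    then show "Wb N a c k * exp (\<theta> * (real k - T)) = exp (- \<theta> * T) * (real (N choose k) * (a * exp \<theta>) ^ k * c ^ (N - k))"
      unfolding Wb_def by (simp add: power_mult_distrib algebra_simps)
  qed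
  also have "\<dots> = exp (- \<theta> * T) * (a * exp \<theta> + c) ^ N"
    by (simp add: binomial_ring)
  finally show ?thesis .
qed



lemma final_real:
  fixes N :: nat and q :: real
  assumes N: "1 \<le> N" and q0: "0 \<le> q" and q1: "q \<le> 1"
  defines "L \<equiv> ln (real N)"
  defines "\<theta> \<equiv> L / (4 * sqrt (real N))"
  shows "exp (- \<theta> * (real N * (q + L / (2 * sqrt (real N))))) * (1 + q * (exp \<theta> - 1)) ^ N
         \<le> exp (- (L\<^sup>2 / 16))"
proof -
  have Np: "0 < real N" using N by simp
  have sq: "0 < sqrt (real N)" using Np by simp
  have sqsq: "sqrt (real N) * sqrt (real N) = real N" using Np by simp
  have L0: "0 \<le> L" unfolding L_def using N by simp
  have th0: "0 \<le> \<theta>" unfolding \<theta>_def using L0 sq by simp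
  have "L = 2 * ln (sqrt (real N))" unfolding L_def using ln_sqrt[of "real N"] by simp
  also have "\<dots> \<le> 2 * (sqrt (real N) - 1)" using ln_le_minus_one[OF sq] by simp
  finally have "L \<le> 4 * sqrt (real N)" using sq by (smt (verit))
  then have th1: "\<theta> \<le> 1" unfolding \<theta>_def using sq by simp
  have eb: "exp \<theta> - 1 \<le> \<theta> + \<theta>\<^sup>2" using exp_bound[OF th0 th1] by simp
  have e0: "0 \<le> exp \<theta> - 1" using th0 by simp
  have base0: "0 \<le> 1 + q * (exp \<theta> - 1)" using q0 e0 by simp
  have "(1 + q * (exp \<theta> - 1)) ^ N \<le> exp (q * (exp \<theta> - 1)) ^ N"
    using base0 by (intro power_mono) auto
  also have "\<dots> = exp (real N * (q * (exp \<theta> - 1)))" by (simp add: exp_of_nat_mult)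
  finally have pw: "(1 + q * (exp \<theta> - 1)) ^ N \<le> exp (real N * (q * (exp \<theta> - 1)))" .
  have "q * (exp \<theta> - 1) \<le> q * (\<theta> + \<theta>\<^sup>2)" using eb q0 by (simp add: mult_left_mono)
  also have "\<dots> \<le> q * \<theta> + \<theta>\<^sup>2" using q1 q0 th0 by (simp add: distrib_left mult_left_le_one_le)
  finally have qb: "real N * (q * (exp \<theta> - 1)) \<le> real N * (q * \<theta>) + real N * \<theta>\<^sup>2"
    using Np by (simp add: distrib_left[symmetric] mult_left_mono)
  have t1: "\<theta> * (real N * (L / (2 * sqrt (real N)))) = L\<^sup>2 / 8"
    unfolding \<theta>_def using sq sqsq by (simp add: field_simps power2_eq_square)
  have t2: "real N * \<theta>\<^sup>2 = L\<^sup>2 / 16"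
    unfolding \<theta>_def using sq sqsq by (simp add: field_simps power2_eq_square)
  have ex: "- \<theta> * (real N * (q + L / (2 * sqrt (real N)))) + real N * (q * (exp \<theta> - 1)) \<le> - (L\<^sup>2 / 16)"
  proof -
    have "- \<theta> * (real N * (q + L / (2 * sqrt (real N)))) = - (real N * (q * \<theta>)) - \<theta> * (real N * (L / (2 * sqrt (real N))))"
      by (simp add: algebra_simps)
    then show ?thesis using qb t1 t2 by linarith
  qed
  have "exp (- \<theta> * (real N * (q + L / (2 * sqrt (real N))))) * (1 + q * (exp \<theta> - 1)) ^ N
     \<le> exp (- \<theta> * (real N * (q + L / (2 * sqrt (real N))))) * exp (real N * (q * (exp \<theta> - 1)))"
    using pw by (intro mult_left_mono) auto
  also have "\<dots> = exp (- \<theta> * (real N * (q + L / (2 * sqrt (real N)))) + real N * (q * (exp \<theta> - 1)))"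
    by (simp only: exp_add[symmetric])
  also have "\<dots> \<le> exp (- (L\<^sup>2 / 16))" using ex by simp
  finally show ?thesis .
qed



theorem lemma6:
  fixes N b :: nat and \<alpha> mu1 mu2 p :: real and route :: policy and \<pi> :: "lbstate \<Rightarrow> real"
  defines "lam \<equiv> 1 - real N powr (- \<alpha>)"
  assumes "1 \<le> N" and "1 \<le> b"
    and "0 < \<alpha>" and "\<alpha> < 1/2"
    and "0 < mu1" and "0 < mu2" and "0 \<le> p" and "p < 1"
    and "1 / mu1 + p / mu2 = 1"
    and "valid_policy N b route"
    and "irreducible_chain N b lam mu1 mu2 p route"
    and "in_Pi N b lam mu1 mu2 p route"
    and "stationary_dist N b lam mu1 mu2 p route \<pi>"
  shows "(\<Sum>s\<in>{s\<in>state_space N b. s 1 2 \<le> p / mu2 + ln (real N) / (2 * sqrt (real N))}. \<pi> s)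
           \<ge> 1 - exp (- (mu1 * mu2 * (ln (real N))\<^sup>2) / (40 * max mu1 mu2))"
proof -
  note N1 = assms(2) and b = assms(3) and m1 = assms(6) and m2 = assms(7) and p0 = assms(8) and p1 = assms(9)
    and con = assms(10) and vp = assms(11) and st = assms(14)
  let ?S = "state_space N b"
  define thr where "thr = p / mu2 + ln (real N) / (2 * sqrt (real N))"
  define P where "P k = (\<Sum>s\<in>{x\<in>?S. Kf N x = k}. \<pi> s)" for k
  define a where "a = mu1 * p"
  define q where "q = p / mu2"
  define L where "L = ln (real N)"
  define \<theta> where "\<theta> = L / (4 * sqrt (real N))"
  define T where "T = real N * (q + L / (2 * sqrt (real N)))"
  have N: "0 < N" using N1 by simp
  have lam0: "0 \<le> lam"
  proof -
    have "1 \<le> real N powr \<alpha>" using ge_one_powr_ge_zero[of "real N" \<alpha>] N1 assms(4) by simp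
    then have "real N powr (- \<alpha>) \<le> 1" unfolding powr_minus by (simp add: inverse_le_1_iff)
    then show ?thesis unfolding lam_def by simp
  qed
  have r: "0 \<le> lam" "0 \<le> mu1" "0 \<le> mu2" "0 \<le> p" "p \<le> 1" using lam0 m1 m2 p0 p1 by auto
  have stu: "(\<forall>s\<in>?S. 0 \<le> \<pi> s) \<and> (\<Sum>s\<in>?S. \<pi> s) = 1"
    using st unfolding stationary_dist_def by (elim conjE) (intro conjI)
  have pos: "\<forall>s\<in>?S. 0 \<le> \<pi> s" using stu by (rule conjunct1)
  have tot1: "(\<Sum>s\<in>?S. \<pi> s) = 1" using stu by (rule conjunct2)
  have fin: "finite ?S"
  proof (rule ccontr)
    assume "infinite ?S"
    then have "(\<Sum>s\<in>?S. \<pi> s) = 0" by (rule sum.infinite)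
    then show False using tot1 by simp
  qed
  have rec: "mu2 * real (Suc k) * P (Suc k) \<le> a * (real N - real k) * P k" for k
    unfolding P_def a_def using recur[OF vp r N b fin st] .
  have Pz: "P k = 0" if "N < k" for k
  proof -
    have "{x\<in>?S. Kf N x = k} = {}" using Kf_le[OF _ b, of _ N] that by fastforce
    then show ?thesis unfolding P_def by (simp only: sum.empty)
  qed
  have Pn: "0 \<le> P k" for k unfolding P_def using pos by (intro sum_nonneg) auto
  have grp: "(\<Sum>k\<in>K. P k) = (\<Sum>s\<in>{x\<in>?S. Kf N x \<in> K}. \<pi> s)" if "K \<subseteq> {..N}" for K
  proof -
    have fK: "finite K" using that finite_subset by blast
    have "(\<Sum>k\<in>K. P k) = (\<Sum>k\<in>K. \<Sum>s\<in>{x \<in> {x\<in>?S. Kf N x \<in> K}. Kf N x = k}. \<pi> s)"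
      unfolding P_def by (intro sum.cong) auto
    also have "\<dots> = (\<Sum>s\<in>{x\<in>?S. Kf N x \<in> K}. \<pi> s)"
      by (rule sum.group) (use fin fK in auto)
    finally show ?thesis .
  qed
  have tot: "(\<Sum>k\<le>N. P k) = 1"
  proof -
    have "{x\<in>?S. Kf N x \<in> {..N}} = ?S" using Kf_le[OF _ b, of _ N] by auto
    then show ?thesis using grp[of "{..N}"] tot1 by simp
  qed
  have a0: "0 \<le> a" unfolding a_def using r by simp
  have td: "(\<Sum>k\<in>{k. k \<le> N \<and> T < real k}. P k) * (a + mu2) ^ N
      \<le> (\<Sum>k\<in>{k. k \<le> N \<and> T < real k}. Wb N a mu2 k)"
    by (rule tail_dom[OF rec Pz Pn a0 m2 tot])
  have th0: "0 \<le> \<theta>" unfolding \<theta>_def L_def using N1 by simp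
  have cw: "(\<Sum>k\<in>{k. k \<le> N \<and> T < real k}. Wb N a mu2 k) \<le> exp (- \<theta> * T) * (a * exp \<theta> + mu2) ^ N"
    by (rule chernoff_W[OF a0 _ th0]) (use m2 in simp)
  have amu: "a + mu2 = mu1 * mu2"
  proof -
    have e: "mu1 * mu2 * (1 / mu1 + p / mu2) = mu2 + mu1 * p" using m1 m2 by (simp add: distrib_left)
    have "mu1 * mu2 * (1 / mu1 + p / mu2) = mu1 * mu2" using con by simp
    then show ?thesis unfolding a_def using e by simp
  qed
  have apos: "0 < a + mu2" using a0 m2 by simp
  have q0: "0 \<le> q" and q1: "q \<le> 1"
  proof -
    show "0 \<le> q" unfolding q_def using r by simp
    have "p / mu2 = 1 - 1 / mu1" using con by simp
    then show "q \<le> 1" unfolding q_def using m1 by simp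
  qed
  have ratio: "(a * exp \<theta> + mu2) / (a + mu2) = 1 + q * (exp \<theta> - 1)"
  proof -
    have "(a + mu2) * (1 + q * (exp \<theta> - 1)) = mu1 * mu2 + mu1 * mu2 * (p / mu2) * (exp \<theta> - 1)"
      unfolding amu q_def by (simp add: algebra_simps)
    also have "\<dots> = mu1 * mu2 + mu1 * p * (exp \<theta> - 1)" using m2 by simp
    also have "\<dots> = a * exp \<theta> + mu2" using amu unfolding a_def by (simp add: algebra_simps)
    finally show ?thesis using apos by (simp add: field_simps)
  qed
  define PH where "PH = (\<Sum>k\<in>{k. k \<le> N \<and> T < real k}. P k)"
  have "PH * (a + mu2) ^ N \<le> exp (- \<theta> * T) * (a * exp \<theta> + mu2) ^ N"
    unfolding PH_def using td cw by linarith
  then have "PH \<le> exp (- \<theta> * T) * (a * exp \<theta> + mu2) ^ N / (a + mu2) ^ N"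
    using apos by (subst pos_le_divide_eq) auto
  also have "\<dots> = exp (- \<theta> * T) * (1 + q * (exp \<theta> - 1)) ^ N"
    unfolding ratio[symmetric] by (simp add: power_divide)
  also have "\<dots> \<le> exp (- (L\<^sup>2 / 16))"
    unfolding T_def \<theta>_def L_def by (rule final_real[OF N1 q0 q1])
  also have "\<dots> \<le> exp (- (mu1 * mu2 * (ln (real N))\<^sup>2) / (40 * max mu1 mu2))"
  proof -
    have mn: "min mu1 mu2 < 2"
    proof -
      have "p / mu2 < 1 / mu2" using p1 m2 by (simp add: divide_strict_right_mono)
      then have h: "1 < 1 / mu1 + 1 / mu2" using con by simp
      show ?thesis
      proof (rule ccontr)
        assume "\<not> min mu1 mu2 < 2"
        then have "2 \<le> mu1" "2 \<le> mu2" by auto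
        then have "1 / mu1 \<le> 1/2" "1 / mu2 \<le> 1/2" by (simp_all add: field_simps)
        then show False using h by simp
      qed
    qed
    have "mu1 * mu2 = min mu1 mu2 * max mu1 mu2" by (simp add: min_def max_def mult.commute)
    also have "\<dots> \<le> 2 * max mu1 mu2" using mn m1 m2 by (intro mult_right_mono) auto
    finally have mm: "mu1 * mu2 \<le> 2 * max mu1 mu2" .
    have mx: "0 < max mu1 mu2" using m1 by simp
    have "mu1 * mu2 / (40 * max mu1 mu2) \<le> 2 * max mu1 mu2 / (40 * max mu1 mu2)"
      using mm mx by (intro divide_right_mono) auto
    also have "\<dots> = 1 / 20" using mx by simp
    finally have "mu1 * mu2 / (40 * max mu1 mu2) \<le> 1 / 16" by simp
    then have "mu1 * mu2 * L\<^sup>2 / (40 * max mu1 mu2) \<le> L\<^sup>2 / 16"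
    proof -
      have "mu1 * mu2 * L\<^sup>2 / (40 * max mu1 mu2) = (mu1 * mu2 / (40 * max mu1 mu2)) * L\<^sup>2" by simp
      also have "\<dots> \<le> (1/16) * L\<^sup>2" using \<open>mu1 * mu2 / (40 * max mu1 mu2) \<le> 1 / 16\<close> by (intro mult_right_mono) auto
      finally show ?thesis by simp
    qed
    then show ?thesis unfolding L_def by simp
  qed
  finally have PHb: "PH \<le> exp (- (mu1 * mu2 * (ln (real N))\<^sup>2) / (40 * max mu1 mu2))" .
  have "PH = (\<Sum>s\<in>{x\<in>?S. Kf N x \<in> {k. k \<le> N \<and> T < real k}}. \<pi> s)"
    unfolding PH_def by (rule grp) auto
  also have "{x\<in>?S. Kf N x \<in> {k. k \<le> N \<and> T < real k}} = {s\<in>?S. \<not> s 1 2 \<le> thr}"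
  proof (intro Collect_cong conj_cong refl)
    fix x assume x: "x \<in> ?S"
    have "T = real N * thr" unfolding T_def thr_def q_def L_def by simp
    then have "(T < real (Kf N x)) = (thr < x 1 2)" using Kf_real[OF x b] N by simp
    then show "(Kf N x \<in> {k. k \<le> N \<and> T < real k}) = (\<not> x 1 2 \<le> thr)" using Kf_le[OF x b] by auto
  qed
  finally have PHe: "PH = (\<Sum>s\<in>{s\<in>?S. \<not> s 1 2 \<le> thr}. \<pi> s)" .
  have "(\<Sum>s\<in>{s\<in>?S. s 1 2 \<le> thr}. \<pi> s) + (\<Sum>s\<in>{s\<in>?S. \<not> s 1 2 \<le> thr}. \<pi> s) = 1"
  proof -
    have u: "?S = {s\<in>?S. s 1 2 \<le> thr} \<union> {s\<in>?S. \<not> s 1 2 \<le> thr}" by auto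
    have "(\<Sum>s\<in>?S. \<pi> s) = (\<Sum>s\<in>{s\<in>?S. s 1 2 \<le> thr}. \<pi> s) + (\<Sum>s\<in>{s\<in>?S. \<not> s 1 2 \<le> thr}. \<pi> s)"
      by (subst u, rule sum.union_disjoint) (use fin in auto)
    then show ?thesis using tot1 by simp
  qed
  then show ?thesis using PHb PHe unfolding thr_def by linarith
qed

end
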